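(* Let $\{q_k:k\ge0\}$ be a non-decreasing sequence of nonnegative numbers with $q_0>0$, and let $N\in\mathbb N$ and $n\ge M_N$. Then there is a constant $c>0$ (independent of $n,N$) such that for all $x\in G_m$ $$\left|\frac1{Q_n}\sum_{j=M_N}^{n}q_{n-j}D_j(x)\right|\le\frac{c}{M_N}\sum_{j=0}^{|n|}M_j\,|K_{M_j}(x)|.$$
   Context: Let $m=(m_0,m_1,\dots)$ be a bounded sequence of integers $m_k\ge 2$; $G_m=\prod_k Z_{m_k}$; $M_0=1$, $M_{k+1}=m_kM_k$, $n=\sum_j n_jM_j$ with $n_j\in Z_{m_j}$. $r_k(x)=\exp(2\pi i x_k/m_k)$, $\psi_n=\prod_k r_k^{n_k}$, $D_n=\sum_{k=0}^{n-1}\psi_k$, $K_n=\frac1n\sum_{k=1}^nD_k$. $Q_n=\sum_{k=0}^{n-1}q_k$. For $n\in\mathbb N_+$, $|n|$ denotes the unique integer with $M_{|n|}\le n<M_{|n|+1}$. *)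

theory Defs
  imports "HOL-Analysis.Analysis"
begin

text \<open>The group G_m = prod_k Z_{m_k}, as sequences x with 0 \<le> x_k < m_k.\<close>
definition vil_group :: "(nat \<Rightarrow> nat) \<Rightarrow> (nat \<Rightarrow> nat) set" where
  "vil_group m = {x. \<forall>k. x k < m k}"

definition vil_M :: "(nat \<Rightarrow> nat) \<Rightarrow> nat \<Rightarrow> nat" where
  "vil_M m k = (\<Prod>j<k. m j)"

definition vil_digit :: "(nat \<Rightarrow> nat) \<Rightarrow> nat \<Rightarrow> nat \<Rightarrow> nat" where
  "vil_digit m n j = (n div vil_M m j) mod m j"

definition vil_r :: "(nat \<Rightarrow> nat) \<Rightarrow> nat \<Rightarrow> (nat \<Rightarrow> nat) \<Rightarrow> complex" where
  "vil_r m k x = exp (2 * complex_of_real pi * \<i> * of_nat (x k) / of_nat (m k))"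

text \<open>psi_n = prod_k r_k^{n_k}; only the finitely many factors with n_k \<noteq> 0 differ from 1.\<close>
definition vil_psi :: "(nat \<Rightarrow> nat) \<Rightarrow> nat \<Rightarrow> (nat \<Rightarrow> nat) \<Rightarrow> complex" where
  "vil_psi m n x = (\<Prod>k \<in> {k. vil_digit m n k \<noteq> 0}. vil_r m k x ^ vil_digit m n k)"

definition vil_D :: "(nat \<Rightarrow> nat) \<Rightarrow> nat \<Rightarrow> (nat \<Rightarrow> nat) \<Rightarrow> complex" where
  "vil_D m n x = (\<Sum>k<n. vil_psi m k x)"

definition vil_K :: "(nat \<Rightarrow> nat) \<Rightarrow> nat \<Rightarrow> (nat \<Rightarrow> nat) \<Rightarrow> complex" where
  "vil_K m n x = (1 / of_nat n) * (\<Sum>k=1..n. vil_D m k x)"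

definition Qsum :: "(nat \<Rightarrow> real) \<Rightarrow> nat \<Rightarrow> real" where
  "Qsum q n = (\<Sum>k<n. q k)"

text \<open>|n|: the unique s with M_s \<le> n < M_{s+1} (for n \<ge> 1).\<close>
definition vil_abs :: "(nat \<Rightarrow> nat) \<Rightarrow> nat \<Rightarrow> nat" where
  "vil_abs m n = (THE s. vil_M m s \<le> n \<and> n < vil_M m (Suc s))"

end

theory Submission imports Defs begin

lemma sum_lessThan_add: fixes a b :: nat shows "(\<Sum>k<a+b. f k) = (\<Sum>k<a. f k) + (\<Sum>k<b. f (a+k))"
  by (induction b) (auto simp: add.assoc)

lemma sum_blocks: fixes p c :: nat shows "(\<Sum>k<p*c. f k) = (\<Sum>c'<c. \<Sum>a<p. f (p*c'+a))"
proof (induction c)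
  case (Suc c)
  have "p * Suc c = p*c + p" by simp
  then show ?case by (simp only: sum_lessThan_add Suc.IH sum.lessThan_Suc)
qed simp

context
  fixes m :: "nat \<Rightarrow> nat"
  assumes m2: "\<And>k. m k \<ge> 2"
begin


abbreviation "M \<equiv> vil_M m"
abbreviation "dg \<equiv> vil_digit m"

lemma M_Suc: "M (Suc k) = M k * m k"
  by (simp add: vil_M_def)

lemma M_pos: "M k > 0"
  using m2 by (auto simp: vil_M_def intro!: prod_pos) (metis not_numeral_le_zero gr0I)

lemma M_strict: "strict_mono M"
proof (rule strict_monoI_Suc)
  fix k show "M k < M (Suc k)" using M_pos[of k] m2[of k] by (simp add: M_Suc)
qed

lemma M_mono: "i \<le> j \<Longrightarrow> M i \<le> M j"
  using M_strict strict_mono_less_eq by blast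

lemma M_less: "i < j \<Longrightarrow> M i < M j"
  using M_strict strict_mono_less by blast

lemma M_ge: "M k \<ge> Suc k"
proof (induction k)
  case 0 then show ?case using M_pos[of 0] by simp
next
  case (Suc k) then show ?case using M_less[of k "Suc k"] by simp
qed

lemma M_dvd: "i \<le> j \<Longrightarrow> M i dvd M j"
  unfolding vil_M_def by (rule prod_dvd_prod_subset) auto

lemma dg_high: "k < M i \<Longrightarrow> dg k i = 0"
  by (simp add: vil_digit_def)

lemma dg_low: "i < p \<Longrightarrow> dg (M p * b) i = 0"
proof -
  assume "i < p"
  then have "M (Suc i) dvd M p" by (intro M_dvd) simp
  then obtain R where R: "M p = M i * m i * R" by (auto simp: M_Suc dvd_def)
  have "M p * b div M i = m i * (R * b)"
    using M_pos[of i] by (simp add: R mult.assoc mult.left_commute)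
  then show ?thesis by (simp add: vil_digit_def)
qed

lemma dg_add: assumes "a < M p" shows "dg (M p * b + a) k = dg a k + dg (M p * b) k"
proof (cases "k < p")
  case True
  then have "M (Suc k) dvd M p" by (intro M_dvd) simp
  then obtain R where R: "M p = M k * m k * R" by (auto simp: M_Suc dvd_def)
  have e: "M p * b + a = a + (m k * (R * b)) * M k" by (simp add: R algebra_simps)
  have "(M p * b + a) div M k = m k * (R * b) + a div M k"
    unfolding e using M_pos[of k] by (simp add: div_mult_self1)
  then show ?thesis using dg_low[OF True, of b] by (simp add: vil_digit_def)
next
  case False
  then have "M p dvd M k" by (intro M_dvd) simp
  then obtain R where R: "M k = M p * R" by (auto simp: dvd_def)
  have 1: "(M p * b + a) div M k = b div R"
    using M_pos[of p] assms by (simp add: R div_mult2_eq)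
  have 2: "M p * b div M k = b div R"
    using M_pos[of p] by (simp add: R)
  have "a < M k" using assms M_mono[of p k] False by simp
  then show ?thesis using 1 2 by (simp add: vil_digit_def)
qed

lemma dg_single: assumes "d < m p" shows "dg (M p * d) i = (if i = p then d else 0)"
proof -
  consider "i < p" | "i = p" | "i > p" by linarith
  then show ?thesis
  proof cases
    case 1 then show ?thesis using dg_low by simp
  next
    case 2 then show ?thesis using M_pos[of p] assms by (simp add: vil_digit_def)
  next
    case 3
    have "M p * d < M p * m p" using assms M_pos[of p] by simp
    also have "\<dots> = M (Suc p)" by (simp add: M_Suc)
    also have "\<dots> \<le> M i" using 3 by (intro M_mono) simp
    finally show ?thesis using 3 dg_high by simp
  qed
qed


abbreviation "r \<equiv> vil_r m"
abbreviation "psi \<equiv> vil_psi m"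
abbreviation "D \<equiv> vil_D m"

lemma psi_prod: assumes "n < M L" shows "psi n x = (\<Prod>k<L. r k x ^ dg n k)"
proof -
  have sub: "{k. dg n k \<noteq> 0} \<subseteq> {..<L}"
  proof
    fix k assume "k \<in> {k. dg n k \<noteq> 0}"
    then have "\<not> n < M k" using dg_high by auto
    then show "k \<in> {..<L}" using assms M_mono[of L k] by (cases "k < L") auto
  qed
  show ?thesis unfolding vil_psi_def
    by (rule prod.mono_neutral_left[OF _ sub]) auto
qed

lemma psi_mult: assumes "a < M p" shows "psi (M p * b + a) x = psi (M p * b) x * psi a x"
proof -
  define L where "L = M p * b + a"
  have L: "M p * b + a < M L" "M p * b < M L" "a < M L" using M_ge[of L] unfolding L_def by auto
  show ?thesis
    unfolding psi_prod[OF L(1)] psi_prod[OF L(2)] psi_prod[OF L(3)] dg_add[OF assms]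
    by (simp add: power_add prod.distrib mult.commute)
qed

lemma psi_one: assumes "\<And>i. dg k i = 0 \<or> x i = 0" shows "psi k x = 1"
  unfolding vil_psi_def
proof (rule prod.neutral, intro ballI)
  fix i assume "i \<in> {k'. dg k k' \<noteq> 0}"
  then have "x i = 0" using assms[of i] by auto
  then show "r i x ^ dg k i = 1" by (simp add: vil_r_def)
qed

lemma norm_r: "cmod (r k x) = 1"
  unfolding vil_r_def by (simp add: norm_exp_eq_Re)

lemma norm_psi: "cmod (psi n x) = 1"
  unfolding vil_psi_def by (simp add: prod_norm[symmetric] norm_power norm_r)

lemma psi_single: assumes "d < m p" shows "psi (M p * d) x = r p x ^ d"
proof -
  have lt: "M p * d < M (Suc p)" using assms M_pos[of p] by (simp add: M_Suc)
  show ?thesis unfolding psi_prod[OF lt] using dg_single[OF assms]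
    by (simp add: prod.lessThan_Suc)
qed

lemma r_pow: "r p x ^ m p = 1"
proof -
  have "r p x ^ m p = exp (of_nat (m p) * (2 * complex_of_real pi * \<i> * of_nat (x p) / of_nat (m p)))"
    unfolding vil_r_def by (simp only: exp_of_nat_mult)
  also have "of_nat (m p) * (2 * complex_of_real pi * \<i> * of_nat (x p) / of_nat (m p)) = 2 * complex_of_real pi * \<i> * of_nat (x p)"
    using m2[of p] by (simp add: field_simps)
  also have "exp (2 * complex_of_real pi * \<i> * of_nat (x p)) = 1" by (simp add: exp_eq_1) (metis of_int_of_nat_eq)
  finally show ?thesis .
qed

lemma r_ne1: assumes "x p \<noteq> 0" "x p < m p" shows "r p x \<noteq> 1"
proof
  assume "r p x = 1"
  then obtain n :: int where n: "2 * pi * real (x p) / real (m p) = of_int (2*n) * pi"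
    unfolding vil_r_def exp_eq_1 by auto
  have mp: "real (m p) > 0" using m2[of p] by simp
  from n have "real (x p) = of_int n * real (m p)" using mp by (simp add: field_simps)
  then have "int (x p) = n * int (m p)" by (metis of_int_eq_iff of_int_mult of_int_of_nat_eq)
  moreover have "0 < int (x p)" "int (x p) < int (m p)" using assms by auto
  moreover have "n \<le> 0 \<or> n \<ge> 1" by arith
  moreover have "n \<le> 0 \<Longrightarrow> n * int (m p) \<le> 0" by (simp add: mult_nonpos_nonneg)
  moreover have "n \<ge> 1 \<Longrightarrow> n * int (m p) \<ge> 1 * int (m p)" by (intro mult_right_mono) auto
  ultimately show False by linarith
qed

lemma geo_zero: assumes "x p \<noteq> 0" "x p < m p" shows "(\<Sum>d<m p. r p x ^ d) = 0"
  using geometric_sum[OF r_ne1[where x=x and p=p, OF assms], of "m p"] r_pow[of p x] by simp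

lemma D_Mmult: "D (M p * c) x = D (M p) x * (\<Sum>c'<c. psi (M p * c') x)"
proof -
  have "D (M p * c) x = (\<Sum>c'<c. \<Sum>a<M p. psi (M p * c' + a) x)"
    unfolding vil_D_def by (rule sum_blocks)
  also have "\<dots> = (\<Sum>c'<c. psi (M p * c') x * D (M p) x)"
    unfolding vil_D_def by (intro sum.cong refl) (simp add: psi_mult sum_distrib_left)
  finally show ?thesis by (simp add: sum_distrib_left mult.commute)
qed

lemma D_shift: assumes "a \<le> M p" shows "D (M p * c + a) x = D (M p * c) x + psi (M p * c) x * D a x"
proof -
  have "D (M p * c + a) x = D (M p * c) x + (\<Sum>k<a. psi (M p * c + k) x)"
    unfolding vil_D_def by (rule sum_lessThan_add)
  also have "(\<Sum>k<a. psi (M p * c + k) x) = psi (M p * c) x * D a x"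
    unfolding vil_D_def sum_distrib_left using assms by (intro sum.cong refl psi_mult) auto
  finally show ?thesis .
qed

lemma D_zero_mono: assumes "D (M p) x = 0" "p \<le> q" shows "D (M q) x = 0"
proof -
  obtain R where "M q = M p * R" using M_dvd[OF assms(2)] by (auto simp: dvd_def)
  then show ?thesis using D_Mmult[of p R] assms(1) by simp
qed

lemma psi_low: assumes "\<And>i. i < p \<Longrightarrow> x i = 0" "k < M p" shows "psi k x = 1"
proof (rule psi_one)
  fix i show "dg k i = 0 \<or> x i = 0"
  proof (cases "i < p")
    case False
    then have "k < M i" using assms(2) M_mono[of p i] by simp
    then show ?thesis using dg_high by simp
  qed (use assms in auto)
qed

lemma D_low: assumes "\<And>i. i < p \<Longrightarrow> x i = 0" "k \<le> M p" shows "D k x = of_nat k"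
  unfolding vil_D_def using psi_low[OF assms(1)] assms(2) by simp

lemma D_first: assumes "x s \<noteq> 0" "x s < m s" "\<And>i. i < s \<Longrightarrow> x i = 0"
  shows "D (M (Suc s)) x = 0"
proof -
  have "D (M (Suc s)) x = D (M s) x * (\<Sum>c'<m s. psi (M s * c') x)"
    unfolding M_Suc by (rule D_Mmult)
  also have "(\<Sum>c'<m s. psi (M s * c') x) = (\<Sum>c'<m s. r s x ^ c')"
    by (intro sum.cong refl psi_single) auto
  also have "\<dots> = 0" by (rule geo_zero[where x=x and p=s, OF assms(1,2)])
  finally show ?thesis by simp
qed

lemma norm_D: "cmod (D k x) \<le> k"
proof -
  have "cmod (D k x) \<le> (\<Sum>i<k. cmod (psi i x))" unfolding vil_D_def by (rule norm_sum)
  then show ?thesis by (simp add: norm_psi)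
qed

definition F :: "nat \<Rightarrow> (nat \<Rightarrow> nat) \<Rightarrow> complex" where
  "F j x = (\<Sum>k<j. D k x)"

lemma norm_F: "cmod (F e x) \<le> real e ^ 2"
proof -
  have "cmod (F e x) \<le> (\<Sum>k<e. cmod (D k x))" unfolding F_def by (rule norm_sum)
  also have "\<dots> \<le> (\<Sum>k<e. real e)"
  proof (intro sum_mono)
    fix k assume "k \<in> {..<e}"
    then show "cmod (D k x) \<le> real e" using norm_D[of k x] by simp
  qed
  finally show ?thesis by (simp add: power2_eq_square)
qed

lemma F_level: assumes "D (M p) x = 0" "e \<le> M p"
  shows "F (M p * c + e) x = F (M p) x * (\<Sum>c'<c. psi (M p * c') x) + psi (M p * c) x * F e x"
proof -
  have Dz: "D (M p * c') x = 0" for c' using D_Mmult[of p c' x] assms(1) by simp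
  have Dsh: "a \<le> M p \<Longrightarrow> D (M p * c' + a) x = psi (M p * c') x * D a x" for a c'
    using D_shift[of a p c' x] Dz[of c'] by simp
  have "F (M p * c + e) x = F (M p * c) x + (\<Sum>k<e. D (M p * c + k) x)"
    unfolding F_def by (rule sum_lessThan_add)
  also have "(\<Sum>k<e. D (M p * c + k) x) = psi (M p * c) x * F e x"
    unfolding F_def sum_distrib_left using assms(2) by (intro sum.cong refl Dsh) auto
  also have "F (M p * c) x = (\<Sum>c'<c. \<Sum>a<M p. D (M p * c' + a) x)"
    unfolding F_def by (rule sum_blocks)
  also have "\<dots> = (\<Sum>c'<c. psi (M p * c') x * F (M p) x)"
    unfolding F_def by (intro sum.cong refl) (simp add: Dsh sum_distrib_left)
  finally show ?thesis by (simp add: sum_distrib_left mult.commute)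
qed

lemma F_level_bound: assumes "D (M p) x = 0" "e \<le> M p"
  shows "cmod (F (M p * c + e) x) \<le> cmod (F (M p) x) * c + cmod (F e x)"
proof -
  have "cmod (\<Sum>c'<c. psi (M p * c') x) \<le> (\<Sum>c'<c. cmod (psi (M p * c') x))" by (rule norm_sum)
  then have s: "cmod (\<Sum>c'<c. psi (M p * c') x) \<le> c" by (simp add: norm_psi)
  have "cmod (F (M p * c + e) x) \<le> cmod (F (M p) x) * cmod (\<Sum>c'<c. psi (M p * c') x) + cmod (psi (M p * c) x) * cmod (F e x)"
    unfolding F_level[OF assms] by (metis norm_mult norm_triangle_ineq)
  also have "\<dots> \<le> cmod (F (M p) x) * c + cmod (F e x)"
    using s by (simp add: norm_psi mult_left_mono)
  finally show ?thesis .
qed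

lemma F_Suc: "F (Suc j) x = F j x + D j x"
  by (simp add: F_def)

lemma psi_mid: assumes "\<And>i. s < i \<Longrightarrow> i < q \<Longrightarrow> x i = 0" "M (Suc s) * c < M q"
  shows "psi (M (Suc s) * c) x = 1"
proof (rule psi_one)
  fix i show "dg (M (Suc s) * c) i = 0 \<or> x i = 0"
  proof (cases "i < Suc s")
    case True then show ?thesis using dg_low by simp
  next
    case False
    show ?thesis
    proof (cases "i < q")
      case False
      then have "M (Suc s) * c < M i" using assms(2) M_mono[of q i] by simp
      then show ?thesis using dg_high by simp
    qed (use assms(1) \<open>\<not> i < Suc s\<close> in auto)
  qed
qed

lemma F_mid: assumes first: "x s \<noteq> 0" "x s < m s" "\<And>i. i < s \<Longrightarrow> x i = 0"
  and mid: "\<And>i. s < i \<Longrightarrow> i < q \<Longrightarrow> x i = 0" and sq: "s < q"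
  shows "F (M q) x = F (M (Suc s)) x * of_nat (M q div M (Suc s))"
proof -
  define R where "R = M q div M (Suc s)"
  have MR: "M q = M (Suc s) * R" using M_dvd[of "Suc s" q] sq unfolding R_def by simp
  have D0: "D (M (Suc s)) x = 0" using D_first[where x=x and s=s] first by blast
  have "F (M (Suc s) * R + 0) x = F (M (Suc s)) x * (\<Sum>c'<R. psi (M (Suc s) * c') x) + psi (M (Suc s) * R) x * F 0 x"
    by (rule F_level[OF D0]) (rule le0)
  also have "(\<Sum>c'<R. psi (M (Suc s) * c') x) = of_nat R"
    using MR M_pos[of "Suc s"] by (simp add: psi_mid[OF mid])
  finally show ?thesis unfolding R_def[symmetric] by (simp add: MR F_def)
qed

lemma inner: assumes first: "x s \<noteq> 0" "x s < m s" "\<And>i. i < s \<Longrightarrow> x i = 0"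
  and mid: "\<And>i. s < i \<Longrightarrow> i < q \<Longrightarrow> x i = 0" and sq: "s < q" and e: "e \<le> M q"
  shows "cmod (F e x) \<le> cmod (F (M q) x) + real (M (Suc s)) ^ 2"
proof -
  define c where "c = e div M (Suc s)"
  define f where "f = e mod M (Suc s)"
  have ecf: "e = M (Suc s) * c + f" unfolding c_def f_def by simp
  have f: "f \<le> M (Suc s)" unfolding f_def using M_pos[of "Suc s"] by (metis mod_less_divisor less_imp_le)
  have 1: "cmod (F e x) \<le> cmod (F (M (Suc s)) x) * c + cmod (F f x)"
    unfolding ecf by (rule F_level_bound[OF D_first[where x=x and s=s, OF first] f])
  have 2: "cmod (F f x) \<le> real (M (Suc s)) ^ 2"
  proof -
    have "real f ^ 2 \<le> real (M (Suc s)) ^ 2" using f by (simp add: power_mono)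
    then show ?thesis using norm_F[of f x] by linarith
  qed
  have "c \<le> M q div M (Suc s)" unfolding c_def using e by (simp add: div_le_mono)
  moreover have "cmod (F (M q) x) = cmod (F (M (Suc s)) x) * real (M q div M (Suc s))"
    using F_mid[where x=x and s=s and q=q, OF first mid sq] by (simp add: norm_mult)
  ultimately have "cmod (F (M (Suc s)) x) * c \<le> cmod (F (M q) x)"
    by (simp add: mult_left_mono)
  with 1 2 show ?thesis by simp
qed

lemma gauss2: "2 * (\<Sum>k<Suc n. k) = n * Suc n"
  by (induction n) auto

lemma T_low: assumes "\<And>i. i < p \<Longrightarrow> x i = 0"
  shows "real (M p) ^ 2 \<le> 2 * cmod (F (Suc (M p)) x)"
proof -
  have "F (Suc (M p)) x = of_nat (\<Sum>k<Suc (M p). k)"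
    unfolding F_def using D_low[OF assms] by simp
  then have "cmod (F (Suc (M p)) x) = real (\<Sum>k<Suc (M p). k)"
    by (simp only: norm_of_nat)
  then have "2 * cmod (F (Suc (M p)) x) = real (2 * (\<Sum>k<Suc (M p). k))"
    by simp
  then have "2 * cmod (F (Suc (M p)) x) = real (M p * Suc (M p))"
    by (simp only: gauss2)
  then show ?thesis by (simp add: power2_eq_square)
qed

lemma Kbound:
  assumes xg: "\<And>i. x i < m i" and Bd: "\<And>k. m k \<le> Bd" and J: "J \<le> M (Suc P)"
  shows "cmod (F J x) \<le> 6 * (real Bd ^ 2 * (\<Sum>u\<le>P. cmod (F (Suc (M u)) x)))"
proof -
  define b where "b = real Bd"
  define T where "T u = cmod (F (Suc (M u)) x)" for u
  define S where "S = (\<Sum>u\<le>P. T u)"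
  have T0: "0 \<le> T u" for u unfolding T_def by simp
  have TS: "u \<le> P \<Longrightarrow> T u \<le> S" for u
    unfolding S_def by (rule member_le_sum) (auto simp: T0)
  have S0: "0 \<le> S" unfolding S_def by (intro sum_nonneg) (simp add: T0)
  have b2: "b \<ge> 2" unfolding b_def using m2[of 0] Bd[of 0] by simp
  have bb1: "b * 1 \<le> b * b" using b2 by (intro mult_left_mono) auto
  have bb: "b \<le> b^2" "1 \<le> b^2" using bb1 b2 unfolding power2_eq_square by linarith+
  have bS1: "b * S \<le> b^2 * S" using bb S0 by (intro mult_right_mono) auto
  have bS2: "1 * S \<le> b^2 * S" using bb S0 by (intro mult_right_mono) auto
  have bS: "b * S \<le> b^2 * S" "S \<le> b^2 * S" using bS1 bS2 by auto
  have MS: "real (M (Suc k)) \<le> b * real (M k)" for k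
    unfolding M_Suc b_def using Bd[of k] by (simp add: mult.commute mult_right_mono)
  have MS2: "real (M (Suc k)) ^ 2 \<le> b^2 * real (M k) ^ 2" for k
    using power_mono[OF MS[of k], of 2] by (simp add: power_mult_distrib)
  have eqs: "2*b^2*S = 2*(b^2*S)" "b^2*(2*S) = 2*(b^2*S)" "S*b = b*S" by (simp_all add: algebra_simps)
  have "cmod (F J x) \<le> 6 * (b^2 * S)"
  proof (cases "\<forall>i\<le>P. x i = 0")
    case True
    have "cmod (F J x) \<le> real J ^ 2" by (rule norm_F)
    also have "\<dots> \<le> real (M (Suc P)) ^ 2" using J by (simp add: power_mono)
    also have "\<dots> \<le> b^2 * real (M P) ^ 2" by (rule MS2)
    also have "real (M P) ^ 2 \<le> 2 * T P" unfolding T_def by (rule T_low) (use True in auto)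
    then have "b^2 * real (M P) ^ 2 \<le> b^2 * (2 * T P)" by (simp add: mult_left_mono)
    also have "\<dots> \<le> b^2 * (2 * S)" using TS[of P] by (simp add: mult_left_mono)
    finally show ?thesis using bS S0 b2 eqs by linarith
  next
    case False
    then have ex: "\<exists>i. i \<le> P \<and> x i \<noteq> 0" by auto
    define s where "s = (LEAST i. i \<le> P \<and> x i \<noteq> 0)"
    have s: "s \<le> P" "x s \<noteq> 0" using LeastI_ex[OF ex] unfolding s_def by auto
    have below: "\<And>i. i < s \<Longrightarrow> x i = 0"
    proof -
      fix i assume "i < s"
      then have "\<not> (i \<le> P \<and> x i \<noteq> 0)" unfolding s_def by (rule not_less_Least)
      then show "x i = 0" using \<open>i < s\<close> s(1) by auto
    qed
    have xs: "x s < m s" by (rule xg)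
    have Ts: "real (M (Suc s)) ^ 2 \<le> 2 * b^2 * S"
    proof -
      have "real (M s) ^ 2 \<le> 2 * T s" unfolding T_def by (rule T_low) (use below in auto)
      then have "real (M s) ^ 2 \<le> 2 * S" using TS[OF s(1)] by simp
      then have "b^2 * real (M s) ^ 2 \<le> b^2 * (2 * S)" by (simp add: mult_left_mono)
      then show ?thesis using MS2[of s] by (simp add: algebra_simps)
    qed
    have D1: "D (M (Suc s)) x = 0" using D_first[where x=x and s=s] s xs below by blast
    have Tgt: "s < u \<Longrightarrow> T u = cmod (F (M u) x)" for u
    proof -
      assume "s < u"
      then have "D (M u) x = 0" using D_zero_mono[OF D1, of u] by simp
      then show ?thesis unfolding T_def F_Suc by simp
    qed
    show ?thesis
    proof (cases "\<forall>i. s < i \<and> i \<le> P \<longrightarrow> x i = 0")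
      case True
      have mid: "\<And>i. s < i \<Longrightarrow> i < Suc P \<Longrightarrow> x i = 0" using True by auto
      have 1: "cmod (F J x) \<le> cmod (F (M (Suc P)) x) + real (M (Suc s)) ^ 2"
        by (rule inner[where x=x and s=s and q="Suc P", OF s(2) xs below mid _ J]) (use s in auto)
      have 2: "cmod (F (M (Suc P)) x) \<le> 2 * b^2 * S"
      proof (cases "s = P")
        case True
        then show ?thesis using norm_F[of "M (Suc s)" x] Ts by simp
      next
        case False
        then have sP: "s < P" using s by simp
        have DP: "D (M P) x = 0" using D_zero_mono[OF D1, of P] sP by simp
        have "cmod (F (M P * m P + 0) x) \<le> cmod (F (M P) x) * m P + cmod (F 0 x)"
          by (rule F_level_bound[OF DP]) simp
        then have "cmod (F (M (Suc P)) x) \<le> T P * m P"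
          using Tgt[OF sP] by (simp add: M_Suc F_def)
        also have "\<dots> \<le> S * b" unfolding b_def using TS[of P] Bd[of P] T0[of P] S0
          by (intro mult_mono) auto
        finally have "cmod (F (M (Suc P)) x) \<le> S * b" .
        moreover have "S * b = b * S" "2 * b^2 * S = b^2 * S + b^2 * S" by (simp_all add: algebra_simps)
        ultimately show ?thesis using bS S0 by linarith
      qed
      show ?thesis using 1 2 Ts eqs bS S0 by linarith
    next
      case False
      then have ex2: "\<exists>i. s < i \<and> i \<le> P \<and> x i \<noteq> 0" by auto
      define t where "t = (LEAST i. s < i \<and> i \<le> P \<and> x i \<noteq> 0)"
      have t: "s < t" "t \<le> P" "x t \<noteq> 0" using LeastI_ex[OF ex2] unfolding t_def by auto
      have mid: "\<And>i. s < i \<Longrightarrow> i < t \<Longrightarrow> x i = 0"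
      proof -
        fix i assume i: "s < i" "i < t"
        then have "\<not> (s < i \<and> i \<le> P \<and> x i \<noteq> 0)" using not_less_Least[OF i(2)[unfolded t_def]] by blast
        then show "x i = 0" using i t(2) by auto
      qed
      have xt: "x t < m t" by (rule xg)
      have Dt: "D (M t) x = 0" using D_zero_mono[OF D1, of t] t by simp
      have Ft1: "F (M (Suc t)) x = 0"
      proof -
        have "F (M t * m t + 0) x = F (M t) x * (\<Sum>c'<m t. psi (M t * c') x) + psi (M t * m t) x * F 0 x"
          by (rule F_level[OF Dt]) (rule le0)
        also have "(\<Sum>c'<m t. psi (M t * c') x) = (\<Sum>c'<m t. r t x ^ c')"
          by (intro sum.cong refl psi_single) auto
        also have "\<dots> = 0" by (rule geo_zero[where x=x and p=t, OF t(3) xt])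
        finally show ?thesis by (simp add: M_Suc F_def)
      qed
      have Dt1: "D (M (Suc t)) x = 0" using D_zero_mono[OF Dt, of "Suc t"] by simp
      define a where "a = J mod M (Suc t)"
      define c where "c = J div M (Suc t)"
      have a: "a < M (Suc t)" unfolding a_def using M_pos by simp
      have "cmod (F (M (Suc t) * c + a) x) \<le> cmod (F (M (Suc t)) x) * c + cmod (F a x)"
        by (rule F_level_bound[OF Dt1]) (use a in simp)
      then have 1: "cmod (F J x) \<le> cmod (F a x)" using Ft1 unfolding a_def c_def by simp
      define e where "e = a mod M t"
      define c2 where "c2 = a div M t"
      have e: "e \<le> M t" unfolding e_def using M_pos[of t] by (metis mod_less_divisor less_imp_le)
      have c2: "c2 \<le> m t"
      proof -
        have "a < M t * m t" using a by (simp add: M_Suc)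
        then have "a div M t < m t" using M_pos[of t] by (simp add: div_less_iff_less_mult mult.commute)
        then show ?thesis unfolding c2_def by simp
      qed
      have "cmod (F (M t * c2 + e) x) \<le> cmod (F (M t) x) * c2 + cmod (F e x)"
        by (rule F_level_bound[OF Dt e])
      then have 2: "cmod (F a x) \<le> T t * c2 + cmod (F e x)"
        using Tgt[OF t(1)] unfolding e_def c2_def by simp
      have "T t * c2 \<le> S * b" unfolding b_def using TS[OF t(2)] c2 Bd[of t] T0[of t] S0
        by (intro mult_mono) auto
      moreover have "cmod (F e x) \<le> cmod (F (M t) x) + real (M (Suc s)) ^ 2"
        by (rule inner[where x=x and s=s and q=t, OF s(2) xs below mid t(1) e])
      moreover have "cmod (F (M t) x) \<le> S" using Tgt[OF t(1)] TS[OF t(2)] by simp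
      ultimately show ?thesis using 1 2 Ts bS eqs S0 by linarith
    qed
  qed
  then show ?thesis unfolding S_def T_def b_def .
qed

lemma abs_prop: assumes "n \<ge> 1" shows "M (vil_abs m n) \<le> n \<and> n < M (Suc (vil_abs m n))"
proof -
  define A where "A = {s. M s \<le> n}"
  have finA: "finite A" unfolding A_def
  proof (rule finite_subset[of _ "{..n}"])
    show "{s. M s \<le> n} \<subseteq> {..n}"
    proof
      fix s assume "s \<in> {s. M s \<le> n}"
      then show "s \<in> {..n}" using M_ge[of s] by simp
    qed
  qed simp
  have "0 \<in> A" unfolding A_def using assms by (simp add: vil_M_def)
  define s where "s = Max A"
  have sA: "s \<in> A" unfolding s_def using finA \<open>0 \<in> A\<close> by (intro Max_in) auto
  have "Suc s \<notin> A"
  proof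
    assume "Suc s \<in> A"
    then have "Suc s \<le> s" unfolding s_def using Max_ge[OF finA] by blast
    then show False by simp
  qed
  then have ex: "M s \<le> n \<and> n < M (Suc s)" using sA unfolding A_def by auto
  have uniq: "s' = s" if "M s' \<le> n \<and> n < M (Suc s')" for s'
  proof (rule ccontr)
    assume "s' \<noteq> s"
    then have "s' < s \<or> s < s'" by arith
    then show False
    proof
      assume "s' < s" then have "M (Suc s') \<le> M s" by (intro M_mono) simp
      then show False using that ex by simp
    next
      assume "s < s'" then have "M (Suc s) \<le> M s'" by (intro M_mono) simp
      then show False using that ex by simp
    qed
  qed
  have "vil_abs m n = s" unfolding vil_abs_def
    by (rule the_equality[where P="\<lambda>s. M s \<le> n \<and> n < M (Suc s)", OF ex]) (rule uniq)
  then show ?thesis using ex by simp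
qed

lemma G_F: "(\<Sum>k=1..j. D k x) = F (Suc j) x"
proof (induction j)
  case 0 then show ?case by (simp add: F_def vil_D_def)
next
  case (Suc j) then show ?case by (simp add: F_Suc)
qed

end

lemma abel_aux:
  fixes q :: "nat \<Rightarrow> real" and h :: "nat \<Rightarrow> complex"
  assumes "mono q" "\<And>k. q k \<ge> 0" "\<And>i. i \<le> Suc L \<Longrightarrow> cmod (h i) \<le> B"
  shows "cmod ((\<Sum>i\<le>L. complex_of_real (q i) * (h i - h (Suc i))) + complex_of_real (q L) * h (Suc L)) \<le> q L * B"
  using assms(3)
proof (induction L)
  case 0
  then have "cmod (h 0) \<le> B" by simp
  then have "q 0 * cmod (h 0) \<le> q 0 * B" using assms(2)[of 0] by (rule mult_left_mono)
  then show ?case using assms(2)[of 0] by (simp add: algebra_simps norm_mult)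
next
  case (Suc L)
  have IH: "cmod ((\<Sum>i\<le>L. complex_of_real (q i) * (h i - h (Suc i))) + complex_of_real (q L) * h (Suc L)) \<le> q L * B"
    using Suc by auto
  have eq: "(\<Sum>i\<le>Suc L. complex_of_real (q i) * (h i - h (Suc i))) + complex_of_real (q (Suc L)) * h (Suc (Suc L))
     = ((\<Sum>i\<le>L. complex_of_real (q i) * (h i - h (Suc i))) + complex_of_real (q L) * h (Suc L))
       + complex_of_real (q (Suc L) - q L) * h (Suc L)"
    by (simp add: algebra_simps)
  have qd: "q (Suc L) - q L \<ge> 0" using assms(1) by (simp add: mono_def)
  have "cmod (complex_of_real (q (Suc L) - q L) * h (Suc L)) \<le> (q (Suc L) - q L) * B"
  proof -
    have "(q (Suc L) - q L) * cmod (h (Suc L)) \<le> (q (Suc L) - q L) * B"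
      using Suc.prems[of "Suc L"] qd by (intro mult_left_mono) auto
    moreover have "cmod (complex_of_real (q (Suc L) - q L)) = q (Suc L) - q L" using qd by (simp only: norm_of_real abs_of_nonneg)
    ultimately show ?thesis by (simp only: norm_mult)
  qed
  then show ?case unfolding eq using IH norm_triangle_ineq[of "(\<Sum>i\<le>L. complex_of_real (q i) * (h i - h (Suc i))) + complex_of_real (q L) * h (Suc L)" "complex_of_real (q (Suc L) - q L) * h (Suc L)"]
    by (simp add: algebra_simps)
qed

lemma abel_bound:
  fixes q :: "nat \<Rightarrow> real" and h :: "nat \<Rightarrow> complex"
  assumes "mono q" "\<And>k. q k \<ge> 0" "\<And>i. i \<le> Suc L \<Longrightarrow> cmod (h i) \<le> B"
  shows "cmod (\<Sum>i\<le>L. complex_of_real (q i) * (h i - h (Suc i))) \<le> 2 * q L * B"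
proof -
  have 1: "cmod (complex_of_real (q L) * h (Suc L)) \<le> q L * B"
    using assms(3)[of "Suc L"] assms(2)[of L] by (simp add: norm_mult mult_left_mono)
  show ?thesis using abel_aux[where q=q and L=L and h=h and B=B, OF assms] 1
      norm_triangle_ineq4[of "(\<Sum>i\<le>L. complex_of_real (q i) * (h i - h (Suc i))) + complex_of_real (q L) * h (Suc L)" "complex_of_real (q L) * h (Suc L)"]
    by simp
qed


theorem mainTheorem5:
  fixes m :: "nat \<Rightarrow> nat" and q :: "nat \<Rightarrow> real"
  assumes m_ge2: "\<And>k. m k \<ge> 2"
    and m_bdd: "bdd_above (range m)"
    and q_mono: "mono q"
    and q_nonneg: "\<And>k. q k \<ge> 0"
    and q0_pos: "q 0 > 0"
  shows "\<exists>c>0. \<forall>N n x. vil_M m N \<le> n \<and> x \<in> vil_group m \<longrightarrow>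
     cmod ((1 / complex_of_real (Qsum q n)) *
           (\<Sum>j = vil_M m N..n. complex_of_real (q (n - j)) * vil_D m j x))
     \<le> c / real (vil_M m N) *
        (\<Sum>j = 0..vil_abs m n. real (vil_M m j) * cmod (vil_K m (vil_M m j) x))"
proof -
  obtain Bd :: nat where Bd: "\<And>k. m k \<le> Bd" using m_bdd by (auto simp: bdd_above_def)
  define b where "b = real Bd"
  have b2: "b \<ge> 2" unfolding b_def using m_ge2[of 0] Bd[of 0] by simp
  show ?thesis
  proof (intro exI[of _ "12 * b^2"] conjI allI impI)
    show "0 < 12 * b^2" using b2 by simp
    fix N n x assume H: "vil_M m N \<le> n \<and> x \<in> vil_group m"
    have xg: "\<And>i. x i < m i" using H by (simp add: vil_group_def)
    have MN: "vil_M m N > 0" by (rule M_pos[OF m_ge2])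
    have n1: "n \<ge> 1" using MN H by simp
    define P where "P = vil_abs m n"
    have P: "vil_M m P \<le> n" "n < vil_M m (Suc P)" using abs_prop[OF m_ge2 n1] unfolding P_def by auto
    define S where "S = (\<Sum>u\<le>P. cmod (F m (Suc (vil_M m u)) x))"
    have S0: "S \<ge> 0" unfolding S_def by (intro sum_nonneg) simp
    have RHS: "(\<Sum>j = 0..vil_abs m n. real (vil_M m j) * cmod (vil_K m (vil_M m j) x)) = S"
      unfolding S_def P_def atLeast0AtMost
    proof (intro sum.cong refl)
      fix u
      have Mu: "real (vil_M m u) > 0" using M_pos[OF m_ge2, where k=u] by simp
      show "real (vil_M m u) * cmod (vil_K m (vil_M m u) x) = cmod (F m (Suc (vil_M m u)) x)"
        unfolding vil_K_def G_F[OF m_ge2] norm_mult using Mu by (simp add: norm_divide)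
    qed
    have hK: "cmod (F m (Suc j) x) \<le> 6 * (b^2 * S)" if "j \<le> n" for j
      using Kbound[OF m_ge2 xg Bd, where J="Suc j" and P=P] P(2) that unfolding S_def b_def by simp
    define L where "L = n - vil_M m N"
    define h where "h i = F m (Suc (n - i)) x" for i
    have sum_eq: "(\<Sum>j = vil_M m N..n. complex_of_real (q (n - j)) * vil_D m j x)
        = (\<Sum>i\<le>L. complex_of_real (q i) * (h i - h (Suc i)))"
    proof -
      have "(\<Sum>j = vil_M m N..n. complex_of_real (q (n - j)) * vil_D m j x)
          = (\<Sum>i\<le>L. complex_of_real (q (n - (n - i))) * vil_D m (n - i) x)"
      proof (rule sum.reindex_bij_witness[of _ "\<lambda>i. n - i" "\<lambda>j. n - j"])
        have MNn: "vil_M m N \<le> n" using H by simp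
        fix a assume a: "a \<in> {vil_M m N..n}"
        then show "n - (n - a) = a" by simp
        show "n - a \<in> {..L}" using a unfolding L_def by (auto intro: diff_le_mono2)
        show "complex_of_real (q (n - (n - (n - a)))) * vil_D m (n - (n - a)) x = complex_of_real (q (n - a)) * vil_D m a x"
          using a by simp
      next
        have MNn: "vil_M m N \<le> n" using H by simp
        fix b assume b: "b \<in> {..L}"
        then show "n - (n - b) = b" using MNn unfolding L_def by simp
        show "n - b \<in> {vil_M m N..n}" using b MNn unfolding L_def by simp
      qed
      also have "\<dots> = (\<Sum>i\<le>L. complex_of_real (q i) * (h i - h (Suc i)))"
      proof (intro sum.cong refl)
        fix i assume "i \<in> {..L}"
        then have i: "i \<le> L" by simp
        then have ni: "n - i \<ge> 1" "n - (n - i) = i" using H MN unfolding L_def by auto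
        have "Suc (n - Suc i) = n - i" using ni by simp
        then have "h i - h (Suc i) = vil_D m (n - i) x"
          unfolding h_def using F_Suc[OF m_ge2, where j="n - i" and x=x] by simp
        then show "complex_of_real (q (n - (n - i))) * vil_D m (n - i) x = complex_of_real (q i) * (h i - h (Suc i))"
          using ni by simp
      qed
      finally show ?thesis .
    qed
    have abel: "cmod (\<Sum>i\<le>L. complex_of_real (q i) * (h i - h (Suc i))) \<le> 2 * q L * (6 * (b^2 * S))"
      by (rule abel_bound[OF q_mono q_nonneg]) (unfold h_def, rule hK, simp)
    have Qge: "real (vil_M m N) * q L \<le> Qsum q n"
    proof -
      have "real (vil_M m N) * q L = (\<Sum>k\<in>{L..<n}. q L)" using H unfolding L_def by simp
      also have "\<dots> \<le> (\<Sum>k\<in>{L..<n}. q k)" using q_mono by (intro sum_mono) (auto simp: mono_def)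
      also have "\<dots> \<le> (\<Sum>k<n. q k)" by (rule sum_mono2) (auto simp: q_nonneg)
      finally show ?thesis unfolding Qsum_def .
    qed
    have qL: "q L > 0" using q0_pos q_mono by (meson le0 less_le_trans monoD)
    have MNr: "real (vil_M m N) \<ge> 1" using MN by simp
    have QL: "q L \<le> Qsum q n" using Qge qL MNr 
    proof -
      have "1 * q L \<le> real (vil_M m N) * q L" using MNr qL by (intro mult_right_mono) auto
      then show ?thesis using Qge by linarith
    qed
    have Qpos: "Qsum q n > 0" using QL qL by simp
    have "cmod ((1 / complex_of_real (Qsum q n)) *
           (\<Sum>j = vil_M m N..n. complex_of_real (q (n - j)) * vil_D m j x))
        = cmod (\<Sum>i\<le>L. complex_of_real (q i) * (h i - h (Suc i))) / Qsum q n"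
      unfolding sum_eq norm_mult using Qpos by (simp add: norm_divide)
    also have "\<dots> \<le> 2 * q L * (6 * (b^2 * S)) / Qsum q n"
      using abel Qpos by (simp add: divide_right_mono)
    also have "\<dots> = (12 * b^2 * S) * (q L / Qsum q n)" by (simp add: algebra_simps)
    also have "\<dots> \<le> (12 * b^2 * S) * (1 / real (vil_M m N))"
    proof (rule mult_left_mono)
      show "q L / Qsum q n \<le> 1 / real (vil_M m N)"
        using Qge Qpos MNr by (simp add: field_simps)
      show "0 \<le> 12 * b^2 * S" using S0 by simp
    qed
    also have "\<dots> = 12 * b^2 / real (vil_M m N) * S" by simp
    finally show "cmod ((1 / complex_of_real (Qsum q n)) *
           (\<Sum>j = vil_M m N..n. complex_of_real (q (n - j)) * vil_D m j x))
     \<le> 12 * b^2 / real (vil_M m N) *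
        (\<Sum>j = 0..vil_abs m n. real (vil_M m j) * cmod (vil_K m (vil_M m j) x))"
      unfolding RHS .
  qed
qed

end
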